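(* Let $n_1,n_2,n^*_1,n^*_2$ be integers with $1\le n_1\le n^*_1\le n^*_2\le n_2$, $n=n_1+n_2$, $n^*=n^*_1+n^*_2$. Let $\psi_1$ be an Archimedean generator with $\phi_1=\psi_1^{-1}$, and $\lambda_1\ge\lambda_2>0$. Let $X_{n:n}(n_1,n_2)$ denote the maximum of $n$ dependent nonnegative random variables sharing an Archimedean copula with generator $\psi_1$, of which $n_1$ have distribution function $x\mapsto F_1(\lambda_1x)$ and $n_2$ have distribution function $x\mapsto F_2(\lambda_2x)$; and let $X_{n^*:n^*}(n^*_1,n^*_2)$ denote the maximum of $n^*$ dependent nonnegative random variables sharing an Archimedean copula with the same generator $\psi_1$, of which $n^*_1$ have distribution function $x\mapsto F_1(\lambda_1x)$ and $n^*_2$ have distribution function $x\mapsto F_2(\lambda_2x)$. Suppose $F_1(x)\ge F_2(x)$ for all $x$. Then $$(n_1,n_2)\succeq_{w}(n^*_1,n^*_2)\ \Longrightarrow\ X_{n^*:n^*}(n^*_1,n^*_2)\le_{st}X_{n:n}(n_1,n_2).$$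
   Context: Archimedean copula: a generator is a continuous nonincreasing $\psi:[0,\infty)\to[0,1]$ with $\psi(0)=1$, $\psi(\infty)=0$, which is $m$-monotone so that it generates an $m$-dimensional copula; $\phi=\psi^{-1}$. Random variables $Z_1,\dots,Z_m$ with marginal distribution functions $G_i$ share an Archimedean copula with generator $\psi$ if $P(Z_1\le z_1,\dots,Z_m\le z_m)=\psi\big(\sum_i\phi(G_i(z_i))\big)$. $F_1,F_2$ are baseline distribution functions of nonnegative random variables. For $\boldsymbol a,\boldsymbol b\in\mathbb R^k$ with increasingly ordered coordinates $a_{(1)}\le\dots\le a_{(k)}$: $\boldsymbol a\succeq_{w}\boldsymbol b$ means $\sum_{i=l}^k a_{(i)}\ge\sum_{i=l}^k b_{(i)}$ for all $l=1,\dots,k$. $U\le_{st}V$ means $P(U>x)\le P(V>x)$ for all $x$. *)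

theory Defs
  imports "HOL-Probability.Probability"
begin

definition m_monotone :: "nat \<Rightarrow> (real \<Rightarrow> real) \<Rightarrow> bool" where
  "m_monotone m \<psi> \<longleftrightarrow> 2 \<le> m \<and>
     (\<forall>k<m-2. \<forall>x>0. (deriv ^^ k) \<psi> differentiable (at x)) \<and>
     (\<forall>k\<le>m-2. \<forall>x>0. 0 \<le> (-1) ^ k * (deriv ^^ k) \<psi> x) \<and>
     (\<forall>x y. 0 < x \<longrightarrow> x \<le> y \<longrightarrow>
        (-1) ^ (m-2) * (deriv ^^ (m-2)) \<psi> y \<le> (-1) ^ (m-2) * (deriv ^^ (m-2)) \<psi> x) \<and>
     convex_on {0<..} (\<lambda>x. (-1) ^ (m-2) * (deriv ^^ (m-2)) \<psi> x)"

definition archimedean_generator :: "nat \<Rightarrow> (real \<Rightarrow> real) \<Rightarrow> bool" where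
  "archimedean_generator m \<psi> \<longleftrightarrow>
     continuous_on {0..} \<psi> \<and>
     (\<forall>x\<ge>0. 0 \<le> \<psi> x \<and> \<psi> x \<le> 1) \<and>
     (\<forall>x y. 0 \<le> x \<longrightarrow> x \<le> y \<longrightarrow> \<psi> y \<le> \<psi> x) \<and>
     \<psi> 0 = 1 \<and> (\<psi> \<longlongrightarrow> 0) at_top \<and>
     m_monotone m \<psi>"

text \<open>phi = psi^{-1} (generalized inverse; for u in (0,1] this is the genuine inverse
  value: psi (gen_inv psi u) = u).\<close>
definition gen_inv :: "(real \<Rightarrow> real) \<Rightarrow> real \<Rightarrow> real" where
  "gen_inv \<psi> u = Inf {x. 0 \<le> x \<and> \<psi> x \<le> u}"

definition nonneg_cdf :: "(real \<Rightarrow> real) \<Rightarrow> bool" where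
  "nonneg_cdf F \<longleftrightarrow> mono F \<and> (\<forall>x. continuous (at_right x) F) \<and>
     (\<forall>x<0. F x = 0) \<and> (F \<longlongrightarrow> 1) at_top"

text \<open>The copula
  formula is required at points where all marginal values are positive; at other points
  the joint probability is 0 automatically.\<close>
definition shares_archimedean_copula ::
  "'a measure \<Rightarrow> (real \<Rightarrow> real) \<Rightarrow> nat \<Rightarrow> (nat \<Rightarrow> 'a \<Rightarrow> real) \<Rightarrow> (nat \<Rightarrow> real \<Rightarrow> real) \<Rightarrow> bool"
  where
  "shares_archimedean_copula M \<psi> m Z G \<longleftrightarrow>
     (\<forall>i<m. Z i \<in> borel_measurable M) \<and>
     (\<forall>i<m. \<forall>x. measure M {\<omega>\<in>space M. Z i \<omega> \<le> x} = G i x) \<and>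
     (\<forall>z. (\<forall>i<m. 0 < G i (z i)) \<longrightarrow>
        measure M {\<omega>\<in>space M. \<forall>i<m. Z i \<omega> \<le> z i}
          = \<psi> (\<Sum>i<m. gen_inv \<psi> (G i (z i))))"

definition weakly_supermajorizes :: "real list \<Rightarrow> real list \<Rightarrow> bool" where
  "weakly_supermajorizes a b \<longleftrightarrow> length a = length b \<and>
     (\<forall>l<length a. (\<Sum>i=l..<length a. sort a ! i) \<ge> (\<Sum>i=l..<length b. sort b ! i))"

definition sample_max :: "nat \<Rightarrow> (nat \<Rightarrow> 'a \<Rightarrow> real) \<Rightarrow> 'a \<Rightarrow> real" where
  "sample_max m Z \<omega> = Max ((\<lambda>i. Z i \<omega>) ` {..<m})"

end

theory Submission
  imports Defs
begin

lemma gen_inv_ne: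
  assumes "archimedean_generator m \<psi>" "0 < u"
  shows "{x. 0 \<le> x \<and> \<psi> x \<le> u} \<noteq> {}"
proof -
  have "(\<psi> \<longlongrightarrow> 0) at_top" using assms(1) unfolding archimedean_generator_def by blast
  hence "eventually (\<lambda>x. \<psi> x < u) at_top" using assms(2) by (simp add: order_tendstoD(2))
  then obtain N where "\<And>x. x \<ge> N \<Longrightarrow> \<psi> x < u" by (auto simp: eventually_at_top_linorder)
  hence "0 \<le> max N 0 \<and> \<psi> (max N 0) \<le> u" by (meson less_imp_le max.cobounded1 max.cobounded2)
  thus ?thesis by blast
qed

lemma gen_inv_nonneg:
  assumes "archimedean_generator m \<psi>" "0 < u"
  shows "0 \<le> gen_inv \<psi> u"
  unfolding gen_inv_def using gen_inv_ne[OF assms] by (intro cInf_greatest) auto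

lemma gen_inv_mono:
  assumes "archimedean_generator m \<psi>" "0 < u" "u \<le> v"
  shows "gen_inv \<psi> v \<le> gen_inv \<psi> u"
  unfolding gen_inv_def
  apply (rule cInf_superset_mono[OF gen_inv_ne[OF assms(1,2)]])
  using assms(3) by (auto simp: bdd_below_def intro!: exI[of _ 0])

lemma sum_split_if:
  "(\<Sum>i<p+q. if i < p then (A::real) else B) = real p * A + real q * B"
  by (induction q) (auto simp: algebra_simps)

lemma max_gt_iff:
  assumes "0 < m"
  shows "(sample_max m Z \<omega> > x) \<longleftrightarrow> \<not> (\<forall>i<m. Z i \<omega> \<le> x)"
  unfolding sample_max_def using assms by (subst Max_gr_iff) (auto simp: not_le)

lemma cdf_nonneg:
  assumes "nonneg_cdf F" shows "0 \<le> F x"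
proof -
  have m: "mono F" and z: "\<forall>x<0. F x = 0" using assms unfolding nonneg_cdf_def by blast+
  have "F (min x (-1)) = 0" using z by simp
  moreover have "F (min x (-1)) \<le> F x" using m by (simp add: monoD)
  ultimately show ?thesis by simp
qed

lemma prob_gt:
  assumes "prob_space M" "0 < m" "\<forall>i<m. Z i \<in> borel_measurable M"
  shows "measure M {\<omega>\<in>space M. sample_max m Z \<omega> > x}
     = 1 - measure M {\<omega>\<in>space M. \<forall>i<m. Z i \<omega> \<le> x}"
proof -
  interpret prob_space M by fact
  have mi: "{\<omega>\<in>space M. Z i \<omega> \<le> x} \<in> sets M" if "i \<in> {..<m}" for i
  proof -
    have [measurable]: "Z i \<in> borel_measurable M" using assms(3) that by simp
    show ?thesis by measurable
  qed
  have meas0: "{\<omega>\<in>space M. \<forall>i\<in>{..<m}. Z i \<omega> \<le> x} \<in> sets M"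
    by (rule sets.sets_Collect_finite_All[OF mi]) auto
  have eqs: "{\<omega>\<in>space M. \<forall>i\<in>{..<m}. Z i \<omega> \<le> x} = {\<omega>\<in>space M. \<forall>i<m. Z i \<omega> \<le> x}"
    by (intro Collect_cong conj_cong refl) (simp add: Ball_def lessThan_iff)
  have meas: "{\<omega>\<in>space M. \<forall>i<m. Z i \<omega> \<le> x} \<in> sets M" using meas0 unfolding eqs .
  have seq: "{\<omega>\<in>space M. sample_max m Z \<omega> > x} = space M - {\<omega>\<in>space M. \<forall>i<m. Z i \<omega> \<le> x}"
    by (auto simp only: max_gt_iff[OF assms(2)])
  show ?thesis unfolding seq by (rule prob_compl[OF meas])
qed


lemma sac_meas: "shares_archimedean_copula M \<psi> m Z G \<Longrightarrow> i < m \<Longrightarrow> Z i \<in> borel_measurable M"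
  unfolding shares_archimedean_copula_def by blast

lemma sac_marg: "shares_archimedean_copula M \<psi> m Z G \<Longrightarrow> i < m \<Longrightarrow>
   measure M {\<omega>\<in>space M. Z i \<omega> \<le> x} = G i x"
  unfolding shares_archimedean_copula_def by blast

lemma sac_joint: "shares_archimedean_copula M \<psi> m Z G \<Longrightarrow> (\<And>i. i < m \<Longrightarrow> 0 < G i x) \<Longrightarrow>
   measure M {\<omega>\<in>space M. \<forall>i<m. Z i \<omega> \<le> x} = \<psi> (\<Sum>i<m. gen_inv \<psi> (G i x))"
  unfolding shares_archimedean_copula_def
  by (drule conjunct2, drule conjunct2, drule spec[of _ "\<lambda>_. x"]) simp

lemma arch_anti: "archimedean_generator m \<psi> \<Longrightarrow> 0 \<le> x \<Longrightarrow> x \<le> y \<Longrightarrow> \<psi> y \<le> \<psi> x"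
  unfolding archimedean_generator_def by (drule conjunct2, drule conjunct2, drule conjunct1) blast

theorem theorem3p2:
  fixes n1 n2 n1' n2' :: nat
    and \<psi> :: "real \<Rightarrow> real"
    and l1 l2 :: real
    and F1 F2 :: "real \<Rightarrow> real"
    and M :: "'a measure" and Z :: "nat \<Rightarrow> 'a \<Rightarrow> real"
    and N :: "'b measure" and Y :: "nat \<Rightarrow> 'b \<Rightarrow> real"
  assumes "1 \<le> n1" and "n1 \<le> n1'" and "n1' \<le> n2'" and "n2' \<le> n2"
    and "archimedean_generator (n1 + n2) \<psi>"
    and "l2 > 0" and "l1 \<ge> l2"
    and "nonneg_cdf F1" and "nonneg_cdf F2"
    and "\<forall>x. F1 x \<ge> F2 x"
    and "prob_space M"
    and "shares_archimedean_copula M \<psi> (n1 + n2) Z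
           (\<lambda>i x. if i < n1 then F1 (l1 * x) else F2 (l2 * x))"
    and "prob_space N"
    and "shares_archimedean_copula N \<psi> (n1' + n2') Y
           (\<lambda>i x. if i < n1' then F1 (l1 * x) else F2 (l2 * x))"
  shows "weakly_supermajorizes [real n1, real n2] [real n1', real n2'] \<Longrightarrow>
         (\<forall>x. measure N {\<omega>\<in>space N. sample_max (n1' + n2') Y \<omega> > x}
              \<le> measure M {\<omega>\<in>space M. sample_max (n1 + n2) Z \<omega> > x})"
proof (intro allI)
  fix x
  assume wm: "weakly_supermajorizes [real n1, real n2] [real n1', real n2']"
  have s1: "sort [real n1, real n2] = [real n1, real n2]" using assms(2,3,4) by simp
  have s2: "sort [real n1', real n2'] = [real n1', real n2']" using assms(3) by simp
  have tot: "n1' + n2' \<le> n1 + n2"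
    using wm[unfolded weakly_supermajorizes_def, THEN conjunct2, rule_format, of 0]
    unfolding s1 s2 by simp
  interpret M: prob_space M by fact
  interpret N: prob_space N by fact
  define a where "a = F1 (l1 * x)"
  define b where "b = F2 (l2 * x)"
  have a0: "0 \<le> a" "0 \<le> b" unfolding a_def b_def using cdf_nonneg assms(8,9) by auto
  have ab: "b \<le> a"
  proof (cases "x \<ge> 0")
    case True
    have "l2 * x \<le> l1 * x" using True assms(7) by (simp add: mult_right_mono)
    hence "F1 (l2 * x) \<le> F1 (l1 * x)" using assms(8) unfolding nonneg_cdf_def by (simp add: monoD)
    thus ?thesis using assms(10) unfolding a_def b_def by (meson order_trans)
  next
    case False
    hence "l2 * x < 0" using assms(6) by (simp add: mult_pos_neg)
    hence "b = 0" using assms(9) unfolding b_def nonneg_cdf_def by auto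
    thus ?thesis using a0 by simp
  qed
  have cM: "shares_archimedean_copula M \<psi> (n1 + n2) Z
           (\<lambda>i x. if i < n1 then F1 (l1 * x) else F2 (l2 * x))" by fact
  have cN: "shares_archimedean_copula N \<psi> (n1' + n2') Y
           (\<lambda>i x. if i < n1' then F1 (l1 * x) else F2 (l2 * x))" by fact
  have pM: "measure M {\<omega>\<in>space M. sample_max (n1 + n2) Z \<omega> > x}
     = 1 - measure M {\<omega>\<in>space M. \<forall>i<n1+n2. Z i \<omega> \<le> x}"
    using cM assms(1,11) by (intro prob_gt sac_meas allI impI) auto
  have pN: "measure N {\<omega>\<in>space N. sample_max (n1' + n2') Y \<omega> > x}
     = 1 - measure N {\<omega>\<in>space N. \<forall>i<n1'+n2'. Y i \<omega> \<le> x}"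
    using cN assms(1,2,13) by (intro prob_gt sac_meas allI impI) auto
  show "measure N {\<omega>\<in>space N. sample_max (n1' + n2') Y \<omega> > x}
              \<le> measure M {\<omega>\<in>space M. sample_max (n1 + n2) Z \<omega> > x}"
  proof (cases "b > 0")
    case False
    hence b0: "b = 0" using a0 by simp
    have "measure M {\<omega>\<in>space M. \<forall>i<n1+n2. Z i \<omega> \<le> x} \<le> measure M {\<omega>\<in>space M. Z n1 \<omega> \<le> x}"
    proof (rule M.finite_measure_mono)
      have lt: "n1 < n1 + n2" using assms(1,2,3,4) by linarith
      thus "{\<omega>\<in>space M. \<forall>i<n1+n2. Z i \<omega> \<le> x} \<subseteq> {\<omega>\<in>space M. Z n1 \<omega> \<le> x}" by auto
      have "Z n1 \<in> borel_measurable M" using cM lt by (rule sac_meas)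
      thus "{\<omega>\<in>space M. Z n1 \<omega> \<le> x} \<in> sets M" by measurable
    qed
    also have "\<dots> = b"
    proof -
      have "n1 < n1 + n2" using assms(1,2,3,4) by linarith
      thus ?thesis using sac_marg[OF cM] unfolding b_def by simp
    qed
    finally have "measure M {\<omega>\<in>space M. \<forall>i<n1+n2. Z i \<omega> \<le> x} = 0" using b0
      by (simp add: measure_nonneg antisym)
    thus ?thesis using pM pN by simp
  next
    case True
    have apos: "a > 0" using True ab by simp
    define pa where "pa = gen_inv \<psi> a"
    define pb where "pb = gen_inv \<psi> b"
    have pab: "0 \<le> pa" "pa \<le> pb"
      unfolding pa_def pb_def using gen_inv_nonneg[OF assms(5) apos] gen_inv_mono[OF assms(5) True ab]
      by auto
    have eqM: "measure M {\<omega>\<in>space M. \<forall>i<n1+n2. Z i \<omega> \<le> x} = \<psi> (real n1 * pa + real n2 * pb)"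
    proof -
      have "measure M {\<omega>\<in>space M. \<forall>i<n1+n2. Z i \<omega> \<le> (\<lambda>_. x) i}
          = \<psi> (\<Sum>i<n1+n2. gen_inv \<psi> (if i < n1 then a else b))"
        using sac_joint[OF cM, of x] apos True unfolding a_def b_def
        by (simp add: if_distrib)
      also have "(\<Sum>i<n1+n2. gen_inv \<psi> (if i < n1 then a else b)) = (\<Sum>i<n1+n2. if i < n1 then pa else pb)"
        unfolding pa_def pb_def by (intro sum.cong) auto
      finally show ?thesis using sum_split_if by simp
    qed
    have eqN: "measure N {\<omega>\<in>space N. \<forall>i<n1'+n2'. Y i \<omega> \<le> x} = \<psi> (real n1' * pa + real n2' * pb)"
    proof -
      have "measure N {\<omega>\<in>space N. \<forall>i<n1'+n2'. Y i \<omega> \<le> (\<lambda>_. x) i}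
          = \<psi> (\<Sum>i<n1'+n2'. gen_inv \<psi> (if i < n1' then a else b))"
        using sac_joint[OF cN, of x] apos True unfolding a_def b_def
        by (simp add: if_distrib)
      also have "(\<Sum>i<n1'+n2'. gen_inv \<psi> (if i < n1' then a else b)) = (\<Sum>i<n1'+n2'. if i < n1' then pa else pb)"
        unfolding pa_def pb_def by (intro sum.cong) auto
      finally show ?thesis using sum_split_if by simp
    qed
    have k1: "real (n1' - n1) * pa \<le> real (n1' - n1) * pb" using pab by (simp add: mult_left_mono)
    have k2: "real (n1' - n1) * pb \<le> real (n2 - n2') * pb" using pab tot assms(2,4)
      by (intro mult_right_mono) auto
    have le: "real n1' * pa + real n2' * pb \<le> real n1 * pa + real n2 * pb"
      using k1 k2 assms(2,4) by (simp add: of_nat_diff algebra_simps)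
    have ge0: "0 \<le> real n1' * pa + real n2' * pb" using pab by (intro add_nonneg_nonneg mult_nonneg_nonneg) auto
    have "\<psi> (real n1 * pa + real n2 * pb) \<le> \<psi> (real n1' * pa + real n2' * pb)"
      using arch_anti[OF assms(5) ge0 le] .
    thus ?thesis using pM pN eqM eqN by simp
  qed
qed

end
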